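(* Let $E$ be a basic set of size $n\ge2$ in a signed group containing at least one pair of anticommuting elements. Then for some $k\in\{1,\dots,n\}$ there exist a replacement $E'$ of $E$ and a partition into disjoint sets $E'=F_0\cup F_1\cup\cdots\cup F_k$ such that each $F_j$, $j\ge1$, is anticommutative of size at least $2$, $F_0$ is commutative, and $F_j\circ F_{j'}=1$ for all $j\neq j'$, $0\le j,j'\le k$.
   Context: A signed group is a group containing a central element $-1\neq1$ with $(-1)^2=1$ such that any two elements either commute or anticommute ($ef=-fe$), and each element $e$ has $e^2\in\{\pm1\}$. For sets, $A\circ B=1$ means every element of $A$ commutes with every element of $B$. For a sequence $\mathbf e$ and finitary $0$-$1$ sequence $\mathbf p$, $\mathbf e^{\mathbf p}=e_1^{p_1}e_2^{p_2}\cdots$. A set is basic if no product $\mathbf e^{\mathbf p}$ of its elements with $\mathbf p\neq\mathbf 0$ equals $\pm1$; it generates $\{\pm\mathbf e^{\mathbf p}\}$; a replacement is another basic set generating the same group. A set is anticommutative (commutative) if its distinct elements pairwise anticommute (commute); singletons and $\emptyset$ count as both. *)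

theory Defs
  imports "HOL-Algebra.Group"
begin

text \<open>A signed group: a group G with a distinguished central element m (playing the role of -1),
  m \<noteq> 1, m^2 = 1, any two elements commute or anticommute, every square is 1 or m.\<close>
definition signed_group :: "('a, 'b) monoid_scheme \<Rightarrow> 'a \<Rightarrow> bool" where
  "signed_group G m \<longleftrightarrow> group G \<and> m \<in> carrier G \<and> m \<noteq> \<one>\<^bsub>G\<^esub> \<and> m \<otimes>\<^bsub>G\<^esub> m = \<one>\<^bsub>G\<^esub>
    \<and> (\<forall>x\<in>carrier G. m \<otimes>\<^bsub>G\<^esub> x = x \<otimes>\<^bsub>G\<^esub> m)
    \<and> (\<forall>e\<in>carrier G. \<forall>f\<in>carrier G.
          e \<otimes>\<^bsub>G\<^esub> f = f \<otimes>\<^bsub>G\<^esub> e \<or> e \<otimes>\<^bsub>G\<^esub> f = m \<otimes>\<^bsub>G\<^esub> (f \<otimes>\<^bsub>G\<^esub> e))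
    \<and> (\<forall>e\<in>carrier G. e \<otimes>\<^bsub>G\<^esub> e = \<one>\<^bsub>G\<^esub> \<or> e \<otimes>\<^bsub>G\<^esub> e = m)"

definition anticommute :: "('a, 'b) monoid_scheme \<Rightarrow> 'a \<Rightarrow> 'a \<Rightarrow> 'a \<Rightarrow> bool" where
  "anticommute G m e f \<longleftrightarrow> e \<otimes>\<^bsub>G\<^esub> f = m \<otimes>\<^bsub>G\<^esub> (f \<otimes>\<^bsub>G\<^esub> e)"

text \<open>Ordered product of a list of elements (the product e^p for the 0-1 sequence p selecting them).\<close>
definition lprod :: "('a, 'b) monoid_scheme \<Rightarrow> 'a list \<Rightarrow> 'a" where
  "lprod G xs = foldr (\<lambda>x y. x \<otimes>\<^bsub>G\<^esub> y) xs \<one>\<^bsub>G\<^esub>"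

definition basic :: "('a, 'b) monoid_scheme \<Rightarrow> 'a \<Rightarrow> 'a set \<Rightarrow> bool" where
  "basic G m E \<longleftrightarrow> E \<subseteq> carrier G \<and>
     (\<forall>xs. distinct xs \<and> xs \<noteq> [] \<and> set xs \<subseteq> E \<longrightarrow>
        lprod G xs \<noteq> \<one>\<^bsub>G\<^esub> \<and> lprod G xs \<noteq> m)"

text \<open>The group generated by E: all elements \<plusminus>e^p.\<close>
definition sgen :: "('a, 'b) monoid_scheme \<Rightarrow> 'a \<Rightarrow> 'a set \<Rightarrow> 'a set" where
  "sgen G m E = {x. \<exists>xs. distinct xs \<and> set xs \<subseteq> E \<and>
                      (x = lprod G xs \<or> x = m \<otimes>\<^bsub>G\<^esub> lprod G xs)}"

definition replacement :: "('a, 'b) monoid_scheme \<Rightarrow> 'a \<Rightarrow> 'a set \<Rightarrow> 'a set \<Rightarrow> bool" where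
  "replacement G m E E' \<longleftrightarrow> basic G m E' \<and> sgen G m E' = sgen G m E"

definition anticommutative :: "('a, 'b) monoid_scheme \<Rightarrow> 'a \<Rightarrow> 'a set \<Rightarrow> bool" where
  "anticommutative G m A \<longleftrightarrow> (\<forall>e\<in>A. \<forall>f\<in>A. e \<noteq> f \<longrightarrow> anticommute G m e f)"

definition commutative_set :: "('a, 'b) monoid_scheme \<Rightarrow> 'a set \<Rightarrow> bool" where
  "commutative_set G A \<longleftrightarrow> (\<forall>e\<in>A. \<forall>f\<in>A. e \<otimes>\<^bsub>G\<^esub> f = f \<otimes>\<^bsub>G\<^esub> e)"

text \<open>A \<circ> B = 1: every element of A commutes with every element of B.\<close>
definition sets_commute :: "('a, 'b) monoid_scheme \<Rightarrow> 'a set \<Rightarrow> 'a set \<Rightarrow> bool" where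
  "sets_commute G A B \<longleftrightarrow> (\<forall>e\<in>A. \<forall>f\<in>B. e \<otimes>\<^bsub>G\<^esub> f = f \<otimes>\<^bsub>G\<^esub> e)"

end

theory Submission
  imports Defs
begin

locale sg = group G for G (structure) + fixes m assumes sgm: "signed_group G m"
begin

lemma sg_all: "m \<in> carrier G \<and> m \<noteq> \<one> \<and> m \<otimes> m = \<one>
    \<and> (\<forall>x\<in>carrier G. m \<otimes> x = x \<otimes> m)
    \<and> (\<forall>e\<in>carrier G. \<forall>f\<in>carrier G. e \<otimes> f = f \<otimes> e \<or> e \<otimes> f = m \<otimes> (f \<otimes> e))
    \<and> (\<forall>e\<in>carrier G. e \<otimes> e = \<one> \<or> e \<otimes> e = m)"
  using sgm unfolding signed_group_def by (rule conjunct2)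
lemma m_carr: "m \<in> carrier G" using sg_all by (elim conjE) assumption
lemma m_ne: "m \<noteq> \<one>" using sg_all by (elim conjE) assumption
lemma mm: "m \<otimes> m = \<one>" using sg_all by (elim conjE) assumption
lemma m_cent0: "\<forall>x\<in>carrier G. m \<otimes> x = x \<otimes> m" using sg_all by (elim conjE) assumption
lemma m_cent: "x \<in> carrier G \<Longrightarrow> m \<otimes> x = x \<otimes> m" using m_cent0 by (rule bspec)
lemma CorA0: "\<forall>e\<in>carrier G. \<forall>f\<in>carrier G. e \<otimes> f = f \<otimes> e \<or> e \<otimes> f = m \<otimes> (f \<otimes> e)"
  using sg_all by (elim conjE) assumption
lemma CorA: "e \<in> carrier G \<Longrightarrow> f \<in> carrier G \<Longrightarrow> e \<otimes> f = f \<otimes> e \<or> e \<otimes> f = m \<otimes> (f \<otimes> e)"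
  using CorA0 by blast
lemma sq0: "\<forall>e\<in>carrier G. e \<otimes> e = \<one> \<or> e \<otimes> e = m" using sg_all by (elim conjE) assumption
lemma sq: "e \<in> carrier G \<Longrightarrow> e \<otimes> e = \<one> \<or> e \<otimes> e = m" using sq0 by (rule bspec)

lemma mmx: "x \<in> carrier G \<Longrightarrow> m \<otimes> (m \<otimes> x) = x"
  by (metis m_assoc m_carr mm l_one)

definition pm :: "'a \<Rightarrow> 'a \<Rightarrow> bool" where "pm x y \<longleftrightarrow> x = y \<or> x = m \<otimes> y"

lemma pm_refl: "pm x x" by (simp add: pm_def)
lemma pm_sym: "y \<in> carrier G \<Longrightarrow> pm x y \<Longrightarrow> pm y x"
  unfolding pm_def using mmx by auto
lemma pm_trans: "y \<in> carrier G \<Longrightarrow> z \<in> carrier G \<Longrightarrow> pm x y \<Longrightarrow> pm y z \<Longrightarrow> pm x z"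
  unfolding pm_def using mmx by auto
lemma pm_multl: "x \<in> carrier G \<Longrightarrow> z \<in> carrier G \<Longrightarrow> pm y z \<Longrightarrow> pm (x \<otimes> y) (x \<otimes> z)"
  unfolding pm_def by (metis m_assoc m_carr m_cent)
lemma pm_multr: "x \<in> carrier G \<Longrightarrow> z \<in> carrier G \<Longrightarrow> pm y z \<Longrightarrow> pm (y \<otimes> x) (z \<otimes> x)"
  unfolding pm_def by (metis m_assoc m_carr)
lemma pm_m: "pm (m \<otimes> x) x" by (simp add: pm_def)
lemma pm_sq: "x \<in> carrier G \<Longrightarrow> w \<in> carrier G \<Longrightarrow> pm (x \<otimes> x \<otimes> w) w"
  using sq[of x] unfolding pm_def by auto
lemma pm_unit: "z \<in> carrier G \<Longrightarrow> pm y z \<Longrightarrow> y = \<one> \<or> y = m \<Longrightarrow> z = \<one> \<or> z = m"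
  unfolding pm_def by (metis m_carr mm r_one mmx one_closed)

lemma lprod_Nil[simp]: "lprod G [] = \<one>" by (simp add: lprod_def)
lemma lprod_Cons[simp]: "lprod G (x#xs) = x \<otimes> lprod G xs" by (simp add: lprod_def)
lemma lprod_carr[simp]: "set xs \<subseteq> carrier G \<Longrightarrow> lprod G xs \<in> carrier G"
  by (induction xs) auto
lemma lprod_append: "set xs \<subseteq> carrier G \<Longrightarrow> set ys \<subseteq> carrier G \<Longrightarrow>
   lprod G (xs @ ys) = lprod G xs \<otimes> lprod G ys"
  by (induction xs) (auto simp: m_assoc)

lemma commute_past: "x \<in> carrier G \<Longrightarrow> set us \<subseteq> carrier G \<Longrightarrow> pm (x \<otimes> lprod G us) (lprod G us \<otimes> x)"
proof (induction us)
  case Nil then show ?case by (simp add: pm_refl)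
next
  case (Cons u us)
  have u: "u \<in> carrier G" and us: "set us \<subseteq> carrier G" using Cons by auto
  let ?L = "lprod G us"
  have L: "?L \<in> carrier G" using us by simp
  have x: "x \<in> carrier G" using Cons(2) .
  have e1: "x \<otimes> (u \<otimes> ?L) = (x \<otimes> u) \<otimes> ?L" using u x L by (simp add: m_assoc)
  have p2: "pm ((x \<otimes> u) \<otimes> ?L) ((u \<otimes> x) \<otimes> ?L)"
    using CorA[of x u] u Cons(2) L
    by (intro pm_multr) (auto simp: pm_def)
  have e3: "(u \<otimes> x) \<otimes> ?L = u \<otimes> (x \<otimes> ?L)" using u x L by (simp add: m_assoc)
  have p4: "pm (u \<otimes> (x \<otimes> ?L)) (u \<otimes> (?L \<otimes> x))"
    using Cons u us by (intro pm_multl) auto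
  have e5: "u \<otimes> (?L \<otimes> x) = lprod G (u#us) \<otimes> x" using u x L by (simp add: m_assoc)
  have "pm ((x \<otimes> u) \<otimes> ?L) (u \<otimes> (?L \<otimes> x))"
    using pm_trans[of "u \<otimes> (x \<otimes> ?L)" "u \<otimes> (?L \<otimes> x)" "(x \<otimes> u) \<otimes> ?L"] p2 e3 p4 u x L by simp
  then show ?case using e1 e5 by simp
qed

lemma NF: "set ys \<subseteq> carrier G \<Longrightarrow> \<exists>zs. distinct zs \<and> set zs = {x. odd (count_list ys x)} \<and> pm (lprod G ys) (lprod G zs)"
proof (induction ys)
  case Nil then show ?case by (auto simp: pm_refl)
next
  case (Cons x ys)
  then obtain zs where zs: "distinct zs" "set zs = {x. odd (count_list ys x)}" "pm (lprod G ys) (lprod G zs)" by auto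
  have x: "x \<in> carrier G" and ys: "set ys \<subseteq> carrier G" using Cons by auto
  have zsc: "set zs \<subseteq> carrier G" using zs(2) ys
    by (auto, metis count_list_0_iff even_zero subsetD)
  show ?case
  proof (cases "x \<in> set zs")
    case False
    have "pm (lprod G (x#ys)) (lprod G (x#zs))" using x ys zsc zs by (simp add: pm_multl)
    moreover have "set (x#zs) = {y. odd (count_list (x#ys) y)}" using False zs(2) by auto
    ultimately show ?thesis using zs False by (intro exI[of _ "x#zs"]) auto
  next
    case True
    then obtain us vs where uv: "zs = us @ x # vs" by (meson split_list)
    have usc: "set us \<subseteq> carrier G" "set vs \<subseteq> carrier G" using zsc uv by auto
    have e1: "pm (lprod G (x#ys)) (x \<otimes> lprod G zs)" using x ys zsc zs by (simp add: pm_multl)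
    have e2: "x \<otimes> lprod G zs = (x \<otimes> lprod G us) \<otimes> (x \<otimes> lprod G vs)"
      using uv usc x by (simp add: lprod_append m_assoc)
    have p3: "pm ((x \<otimes> lprod G us) \<otimes> (x \<otimes> lprod G vs)) ((lprod G us \<otimes> x) \<otimes> (x \<otimes> lprod G vs))"
      using commute_past[of x us] usc x by (intro pm_multr) auto
    have e4: "(lprod G us \<otimes> x) \<otimes> (x \<otimes> lprod G vs) = lprod G us \<otimes> (x \<otimes> x \<otimes> lprod G vs)"
      using usc x by (simp add: m_assoc)
    have p5: "pm (lprod G us \<otimes> (x \<otimes> x \<otimes> lprod G vs)) (lprod G us \<otimes> lprod G vs)"
      using usc x by (intro pm_multl pm_sq) auto
    have e6: "lprod G us \<otimes> lprod G vs = lprod G (us @ vs)" using usc by (simp add: lprod_append)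
    have q1: "pm (lprod G (x#ys)) ((lprod G us \<otimes> x) \<otimes> (x \<otimes> lprod G vs))"
      using pm_trans[OF _ _ e1[unfolded e2] p3] usc x by simp
    have q2: "pm (lprod G (x#ys)) (lprod G us \<otimes> lprod G vs)"
      using pm_trans[OF _ _ q1[unfolded e4] p5] usc x by simp
    have "pm (lprod G (x#ys)) (lprod G (us @ vs))" using q2 e6 by simp
    moreover have "distinct (us @ vs)" using zs(1) uv by auto
    moreover have "set (us @ vs) = {y. odd (count_list (x#ys) y)}"
    proof -
      have "set (us @ vs) = set zs - {x}" using zs(1) uv by auto
      thus ?thesis using zs(2) True by auto
    qed
    ultimately show ?thesis by blast
  qed
qed

definition cm :: "'a \<Rightarrow> 'a \<Rightarrow> bool" where "cm e f \<longleftrightarrow> e \<otimes> f = f \<otimes> e"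
abbreviation an :: "'a \<Rightarrow> 'a \<Rightarrow> bool" where "an e f \<equiv> anticommute G m e f"

lemma cm_or_an: "e \<in> carrier G \<Longrightarrow> f \<in> carrier G \<Longrightarrow> cm e f \<or> an e f"
  using CorA by (simp add: cm_def anticommute_def)
lemma not_cm_an: "e \<in> carrier G \<Longrightarrow> f \<in> carrier G \<Longrightarrow> cm e f \<Longrightarrow> an e f \<Longrightarrow> False"
proof -
  assume c: "e \<in> carrier G" "f \<in> carrier G" and h: "cm e f" "an e f"
  then have "f \<otimes> e = m \<otimes> (f \<otimes> e)" unfolding cm_def anticommute_def by simp
  then have "m = \<one>" using r_cancel_one'[of "f \<otimes> e" m] c m_carr by simp
  then show False using m_ne by simp
qed
lemma cm_refl: "cm e e" by (simp add: cm_def)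
lemma cm_sym: "cm e f \<Longrightarrow> cm f e" by (simp add: cm_def)
lemma an_sym: "e \<in> carrier G \<Longrightarrow> f \<in> carrier G \<Longrightarrow> an e f \<Longrightarrow> an f e"
proof -
  assume c: "e \<in> carrier G" "f \<in> carrier G" and h: "an e f"
  have "m \<otimes> (e \<otimes> f) = m \<otimes> (m \<otimes> (f \<otimes> e))" using h by (simp add: anticommute_def)
  also have "\<dots> = f \<otimes> e" using mmx c by simp
  finally show ?thesis by (simp add: anticommute_def)
qed
lemma mlift: "f \<in> carrier G \<Longrightarrow> w \<in> carrier G \<Longrightarrow> f \<otimes> (m \<otimes> w) = m \<otimes> (f \<otimes> w)"
proof -
  assume c: "f \<in> carrier G" "w \<in> carrier G"
  have "f \<otimes> (m \<otimes> w) = (f \<otimes> m) \<otimes> w" using c m_carr by (simp add: m_assoc)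
  also have "\<dots> = (m \<otimes> f) \<otimes> w" using m_cent c by simp
  also have "\<dots> = m \<otimes> (f \<otimes> w)" using c m_carr by (simp add: m_assoc)
  finally show ?thesis .
qed
lemma cm_mult: assumes "e \<in> carrier G" "f \<in> carrier G" "g \<in> carrier G" "cm f e" "cm g e"
  shows "cm (f \<otimes> g) e"
proof -
  have "(f \<otimes> g) \<otimes> e = f \<otimes> (g \<otimes> e)" using assms by (simp add: m_assoc)
  also have "\<dots> = f \<otimes> (e \<otimes> g)" using assms by (simp add: cm_def)
  also have "\<dots> = (f \<otimes> e) \<otimes> g" using assms by (simp add: m_assoc)
  also have "\<dots> = (e \<otimes> f) \<otimes> g" using assms by (simp add: cm_def)
  also have "\<dots> = e \<otimes> (f \<otimes> g)" using assms by (simp add: m_assoc)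
  finally show ?thesis by (simp add: cm_def)
qed
lemma aa_mult: assumes "e \<in> carrier G" "f \<in> carrier G" "g \<in> carrier G" "an f e" "an g e"
  shows "cm (f \<otimes> g) e"
proof -
  have "(f \<otimes> g) \<otimes> e = f \<otimes> (m \<otimes> (e \<otimes> g))" using assms by (simp add: m_assoc anticommute_def)
  also have "\<dots> = m \<otimes> (f \<otimes> (e \<otimes> g))" using assms by (simp add: mlift)
  also have "\<dots> = m \<otimes> ((f \<otimes> e) \<otimes> g)" using assms by (simp add: m_assoc)
  also have "\<dots> = m \<otimes> ((m \<otimes> (e \<otimes> f)) \<otimes> g)" using assms by (simp add: anticommute_def)
  also have "\<dots> = m \<otimes> (m \<otimes> ((e \<otimes> f) \<otimes> g))" using assms m_carr by (simp add: m_assoc)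
  also have "\<dots> = e \<otimes> (f \<otimes> g)" using assms by (simp add: mmx m_assoc)
  finally show ?thesis by (simp add: cm_def)
qed
lemma ac_mult: assumes "e \<in> carrier G" "f \<in> carrier G" "g \<in> carrier G" "an f e" "cm g e"
  shows "an (f \<otimes> g) e"
proof -
  have "(f \<otimes> g) \<otimes> e = f \<otimes> (e \<otimes> g)" using assms by (simp add: m_assoc cm_def)
  also have "\<dots> = (f \<otimes> e) \<otimes> g" using assms by (simp add: m_assoc)
  also have "\<dots> = (m \<otimes> (e \<otimes> f)) \<otimes> g" using assms by (simp add: anticommute_def)
  also have "\<dots> = m \<otimes> (e \<otimes> (f \<otimes> g))" using assms m_carr by (simp add: m_assoc)
  finally show ?thesis by (simp add: anticommute_def)
qed
lemma ca_mult: assumes "e \<in> carrier G" "f \<in> carrier G" "g \<in> carrier G" "cm f e" "an g e"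
  shows "an (f \<otimes> g) e"
proof -
  have "(f \<otimes> g) \<otimes> e = f \<otimes> (m \<otimes> (e \<otimes> g))" using assms by (simp add: m_assoc anticommute_def)
  also have "\<dots> = m \<otimes> (f \<otimes> (e \<otimes> g))" using assms by (simp add: mlift)
  also have "\<dots> = m \<otimes> ((f \<otimes> e) \<otimes> g)" using assms by (simp add: m_assoc)
  also have "\<dots> = m \<otimes> (e \<otimes> (f \<otimes> g))" using assms by (simp add: cm_def m_assoc)
  finally show ?thesis by (simp add: anticommute_def)
qed

lemma sgen_I: "E \<subseteq> carrier G \<Longrightarrow> set ys \<subseteq> E \<Longrightarrow> pm w (lprod G ys) \<Longrightarrow> w \<in> sgen G m E"
proof -
  assume E: "E \<subseteq> carrier G" and ys: "set ys \<subseteq> E" and w: "pm w (lprod G ys)"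
  obtain zs where zs: "distinct zs" "set zs = {x. odd (count_list ys x)}" "pm (lprod G ys) (lprod G zs)"
    using NF[of ys] E ys by auto
  have "set zs \<subseteq> E" using zs(2) ys by (auto, metis count_list_0_iff even_zero subsetD)
  moreover have "pm w (lprod G zs)" using pm_trans[OF _ _ w zs(3)] E ys \<open>set zs \<subseteq> E\<close> by auto
  ultimately show ?thesis using zs(1) unfolding sgen_def pm_def by blast
qed
lemma sgen_E: "w \<in> sgen G m E \<Longrightarrow> \<exists>xs. distinct xs \<and> set xs \<subseteq> E \<and> pm w (lprod G xs)"
  unfolding sgen_def pm_def by blast
lemma sgen_carr: "E \<subseteq> carrier G \<Longrightarrow> sgen G m E \<subseteq> carrier G"
  unfolding sgen_def using m_carr by auto
lemma sgen_mult: assumes E: "E \<subseteq> carrier G" and x: "x \<in> sgen G m E" and y: "y \<in> sgen G m E"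
  shows "x \<otimes> y \<in> sgen G m E"
proof -
  obtain xs ys where xs: "set xs \<subseteq> E" "pm x (lprod G xs)" and ys: "set ys \<subseteq> E" "pm y (lprod G ys)"
    using sgen_E[OF x] sgen_E[OF y] by blast
  have c: "x \<in> carrier G" "y \<in> carrier G" using sgen_carr E x y by auto
  have cx: "set xs \<subseteq> carrier G" "set ys \<subseteq> carrier G" using xs ys E by auto
  have a1: "pm (x \<otimes> y) (lprod G xs \<otimes> y)" using pm_multr xs c cx by auto
  have a2: "pm (lprod G xs \<otimes> y) (lprod G xs \<otimes> lprod G ys)" using pm_multl ys c cx by auto
  have "pm (x \<otimes> y) (lprod G (xs @ ys))" using pm_trans[OF _ _ a1 a2] cx c
    by (simp add: lprod_append)
  thus ?thesis using sgen_I[OF E, of "xs @ ys"] xs ys by auto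
qed
lemma sgen_m: "E \<subseteq> carrier G \<Longrightarrow> m \<in> sgen G m E"
  by (rule sgen_I[of E "[]"]) (auto simp: pm_def m_carr)
lemma sgen_one: "E \<subseteq> carrier G \<Longrightarrow> \<one> \<in> sgen G m E"
  by (rule sgen_I[of E "[]"]) (auto simp: pm_def m_carr)
lemma sgen_self: "E \<subseteq> carrier G \<Longrightarrow> E \<subseteq> sgen G m E"
proof
  fix e assume "E \<subseteq> carrier G" "e \<in> E"
  thus "e \<in> sgen G m E" by (intro sgen_I[of E "[e]"]) (auto simp: pm_def)
qed
lemma lprod_sgen: "E \<subseteq> carrier G \<Longrightarrow> set xs \<subseteq> sgen G m E \<Longrightarrow> lprod G xs \<in> sgen G m E"
  by (induction xs) (auto simp: sgen_one sgen_mult)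
lemma sgen_closure: assumes E: "E \<subseteq> carrier G" and A: "A \<subseteq> sgen G m E" shows "sgen G m A \<subseteq> sgen G m E"
proof
  fix w assume "w \<in> sgen G m A"
  then obtain xs where xs: "set xs \<subseteq> A" "pm w (lprod G xs)" using sgen_E by blast
  have l: "lprod G xs \<in> sgen G m E" using lprod_sgen[OF E] xs A by auto
  show "w \<in> sgen G m E" using xs(2) l sgen_mult[OF E sgen_m[OF E] l] unfolding pm_def by auto
qed
lemma sgen_mono: "E \<subseteq> carrier G \<Longrightarrow> A \<subseteq> E \<Longrightarrow> sgen G m A \<subseteq> sgen G m E"
  using sgen_closure sgen_self by blast
lemma lprod_cm: "a \<in> carrier G \<Longrightarrow> set xs \<subseteq> carrier G \<Longrightarrow> \<forall>x\<in>set xs. cm x a \<Longrightarrow> cm (lprod G xs) a"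
proof (induction xs)
  case Nil then show ?case by (simp add: cm_def)
next
  case (Cons x xs) then show ?case using cm_mult[of a x "lprod G xs"] by simp
qed
lemma sgen_cm: assumes E: "E \<subseteq> carrier G" and a: "a \<in> carrier G" and c: "\<forall>x\<in>E. cm x a"
  and w: "w \<in> sgen G m E" shows "cm w a"
proof -
  obtain xs where xs: "set xs \<subseteq> E" "pm w (lprod G xs)" using sgen_E[OF w] by blast
  have l: "cm (lprod G xs) a" using lprod_cm[OF a] xs E c by auto
  have "cm m a" using m_cent a by (simp add: cm_def)
  then show ?thesis using xs E a l cm_mult[OF a m_carr, of "lprod G xs"] unfolding pm_def by auto
qed

lemma basic_carr: "basic G m E \<Longrightarrow> E \<subseteq> carrier G" by (simp add: basic_def)
lemma basic_subset: "basic G m E \<Longrightarrow> A \<subseteq> E \<Longrightarrow> basic G m A" unfolding basic_def by blast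
lemma basic_odd: assumes b: "basic G m E" and ys: "set ys \<subseteq> E" and o: "odd (count_list ys x)"
  shows "lprod G ys \<noteq> \<one> \<and> lprod G ys \<noteq> m"
proof -
  have E: "E \<subseteq> carrier G" using b basic_carr by auto
  obtain zs where zs: "distinct zs" "set zs = {x. odd (count_list ys x)}" "pm (lprod G ys) (lprod G zs)"
    using NF[of ys] E ys by auto
  have sz: "set zs \<subseteq> E" using zs(2) ys by (auto, metis count_list_0_iff even_zero subsetD)
  have "zs \<noteq> []" using zs(2) o by auto
  then have "lprod G zs \<noteq> \<one> \<and> lprod G zs \<noteq> m" using b zs(1) sz unfolding basic_def by blast
  then show ?thesis using pm_unit[OF _ zs(3)] sz E by auto
qed

lemma basic_ne1: assumes "basic G m E" "x \<in> E" shows "x \<noteq> \<one>"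
proof -
  have "distinct [x] \<and> [x] \<noteq> [] \<and> set [x] \<subseteq> E" using assms(2) by simp
  then have "lprod G [x] \<noteq> \<one>" using assms(1) unfolding basic_def by blast
  then show ?thesis using assms basic_carr by auto
qed

lemma EO: assumes bE: "basic G m E" and fin: "finite E" and x: "x \<in> E" and y: "y \<in> E" and xy: "x \<noteq> y"
  shows "basic G m (insert (x \<otimes> y) (E - {x})) \<and> sgen G m (insert (x \<otimes> y) (E - {x})) = sgen G m E
    \<and> x \<otimes> y \<notin> E - {x} \<and> card (insert (x \<otimes> y) (E - {x})) = card E"
proof -
  let ?E1 = "insert (x \<otimes> y) (E - {x})"
  have E: "E \<subseteq> carrier G" using bE basic_carr by auto
  have xc: "x \<in> carrier G" and yc: "y \<in> carrier G" using x y E by auto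
  have E1c: "?E1 \<subseteq> carrier G" using E xc yc by auto
  have nxy: "x \<otimes> y \<notin> E - {x}"
  proof
    assume z: "x \<otimes> y \<in> E - {x}"
    show False
    proof (cases "x \<otimes> y = y")
      case True then have "x = \<one>" using xc yc by simp
      then show False using basic_ne1[OF bE x] by simp
    next
      case False
      have "distinct [x, y, x \<otimes> y] \<and> [x, y, x \<otimes> y] \<noteq> [] \<and> set [x, y, x \<otimes> y] \<subseteq> E"
        using False z xy x y by auto
      then have ne: "lprod G [x, y, x \<otimes> y] \<noteq> \<one> \<and> lprod G [x, y, x \<otimes> y] \<noteq> m"
        using bE unfolding basic_def by blast
      have "lprod G [x, y, x \<otimes> y] = (x \<otimes> y) \<otimes> (x \<otimes> y)" using xc yc by (simp add: m_assoc)
      then show False using ne sq[of "x \<otimes> y"] xc yc by simp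
    qed
  qed
  have basic1: "basic G m ?E1"
    unfolding basic_def
  proof (rule conjI[OF E1c], intro allI impI)
    fix ws assume ws: "distinct ws \<and> ws \<noteq> [] \<and> set ws \<subseteq> ?E1"
    show "lprod G ws \<noteq> \<one> \<and> lprod G ws \<noteq> m"
    proof (cases "x \<otimes> y \<in> set ws")
      case False then have "set ws \<subseteq> E" using ws by auto
      then show ?thesis using bE ws unfolding basic_def by blast
    next
      case True
      then obtain us vs where uv: "ws = us @ (x \<otimes> y) # vs" by (meson split_list)
      have sus: "set us \<subseteq> E - {x}" "set vs \<subseteq> E - {x}" using ws uv by auto
      have cus: "set us \<subseteq> carrier G" "set vs \<subseteq> carrier G" using sus E by auto
      let ?ys = "us @ x # y # vs"
      have "lprod G ?ys = lprod G ws" using uv cus xc yc by (simp add: lprod_append m_assoc)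
      moreover have "set ?ys \<subseteq> E" using sus x y by auto
      moreover have "count_list ?ys x = 1"
      proof -
        have "x \<notin> set us" "x \<notin> set vs" using sus by auto
        then show "count_list ?ys x = 1" using xy by simp
      qed
      ultimately show ?thesis using basic_odd[OF bE, of ?ys x] by auto
    qed
  qed
  have s1: "?E1 \<subseteq> sgen G m E" using sgen_self[OF E] sgen_mult[OF E] x y by auto
  have "x \<in> sgen G m ?E1"
  proof -
    have a: "(x \<otimes> y) \<otimes> y \<in> sgen G m ?E1" using sgen_mult[OF E1c] sgen_self[OF E1c] xy y by auto
    have "(x \<otimes> y) \<otimes> y = x \<otimes> (y \<otimes> y)" using xc yc by (simp add: m_assoc)
    then have "x = (x \<otimes> y) \<otimes> y \<or> x = m \<otimes> ((x \<otimes> y) \<otimes> y)"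
      using sq[OF yc] xc by (metis m_cent m_carr mmx r_one)
    then show ?thesis using a sgen_mult[OF E1c sgen_m[OF E1c] a] by auto
  qed
  then have s2: "E \<subseteq> sgen G m ?E1" using sgen_self[OF E1c] by auto
  have "sgen G m ?E1 = sgen G m E"
    using sgen_closure[OF E s1] sgen_closure[OF E1c s2] by auto
  moreover have "card ?E1 = card E"
  proof -
    have "card ?E1 = card (E - {x}) + 1" using nxy fin by simp
    also have "\<dots> = card E" using fin x by (simp add: card_Diff_singleton) (metis Suc_pred card_gt_0_iff empty_iff fin)
    finally show ?thesis .
  qed
  ultimately show ?thesis using basic1 nxy by blast
qed

lemma MC: assumes bE: "basic G m E" and fin: "finite E" and a: "a \<in> E" and b: "b \<in> E" and x: "x \<in> E"
  and d: "x \<noteq> a" "x \<noteq> b" "a \<noteq> b" and ab: "an a b"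
  shows "\<exists>x'. basic G m (insert x' (E - {x})) \<and> sgen G m (insert x' (E - {x})) = sgen G m E
     \<and> card (insert x' (E - {x})) = card E \<and> cm x' a \<and> cm x' b"
proof -
  have E: "E \<subseteq> carrier G" using bE basic_carr by auto
  have c: "a \<in> carrier G" "b \<in> carrier G" "x \<in> carrier G" using a b x E by auto
  have ba: "an b a" using an_sym c ab by auto
  consider "cm x a" "cm x b" | "an x a" "cm x b" | "cm x a" "an x b" | "an x a" "an x b"
    using cm_or_an c by blast
  then show ?thesis
  proof cases
    case 1
    have "insert x (E - {x}) = E" using x by auto
    then show ?thesis using 1 bE by (intro exI[of _ x]) auto
  next
    case 2
    have "cm (x \<otimes> b) a" using aa_mult[of a x b] c 2 ba by auto
    moreover have "cm (x \<otimes> b) b" using cm_mult[of b x b] c 2 cm_refl by auto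
    ultimately show ?thesis using EO[OF bE fin x b] d by (intro exI[of _ "x \<otimes> b"]) auto
  next
    case 3
    have "cm (x \<otimes> a) a" using cm_mult[of a x a] c 3 cm_refl by auto
    moreover have "cm (x \<otimes> a) b" using aa_mult[of b x a] c 3 ab by auto
    ultimately show ?thesis using EO[OF bE fin x a] d by (intro exI[of _ "x \<otimes> a"]) auto
  next
    case 4
    let ?E3 = "insert (x \<otimes> a) (E - {x})"
    have e3: "basic G m ?E3" "sgen G m ?E3 = sgen G m E" "x \<otimes> a \<notin> E - {x}" "card ?E3 = card E"
      using EO[OF bE fin x a] d by auto
    have f3: "finite ?E3" using fin by auto
    have "x \<otimes> a \<noteq> b" using e3(3) b d by auto
    then have e4: "basic G m (insert ((x \<otimes> a) \<otimes> b) (?E3 - {x \<otimes> a}))"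
      "sgen G m (insert ((x \<otimes> a) \<otimes> b) (?E3 - {x \<otimes> a})) = sgen G m ?E3"
      "card (insert ((x \<otimes> a) \<otimes> b) (?E3 - {x \<otimes> a})) = card ?E3"
      using EO[OF e3(1) f3, of "x \<otimes> a" b] b d by auto
    have eq: "?E3 - {x \<otimes> a} = E - {x}" using e3(3) by auto
    have xa: "an (x \<otimes> a) a" using ac_mult[of a x a] c 4 cm_refl by auto
    have xb: "cm (x \<otimes> a) b" using aa_mult[of b x a] c 4 ab by auto
    have "cm ((x \<otimes> a) \<otimes> b) a" using aa_mult[of a "x \<otimes> a" b] c xa ba by auto
    moreover have "cm ((x \<otimes> a) \<otimes> b) b" using cm_mult[of b "x \<otimes> a" b] c xb cm_refl by auto
    ultimately show ?thesis using e4 e3 unfolding eq by (intro exI[of _ "(x \<otimes> a) \<otimes> b"]) auto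
  qed
qed

lemma IT: assumes bE: "basic G m E" and fin: "finite E" and a: "a \<in> E" and b: "b \<in> E"
  and d: "a \<noteq> b" and ab: "an a b"
  shows "finite X \<Longrightarrow> X \<subseteq> E - {a,b} \<Longrightarrow> \<exists>E'. finite E' \<and> basic G m E' \<and> sgen G m E' = sgen G m E
     \<and> card E' = card E \<and> a \<in> E' \<and> b \<in> E' \<and> E - X \<subseteq> E' \<and> (\<forall>z\<in>E'. z \<notin> E - X \<longrightarrow> cm z a \<and> cm z b)"
proof (induction X rule: finite_induct)
  case empty
  then show ?case using bE fin a b by (intro exI[of _ E]) auto
next
  case (insert x X)
  then obtain E' where E': "finite E'" "basic G m E'" "sgen G m E' = sgen G m E"
     "card E' = card E" "a \<in> E'" "b \<in> E'" "E - X \<subseteq> E'" "\<forall>z\<in>E'. z \<notin> E - X \<longrightarrow> cm z a \<and> cm z b"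
    by auto
  have x: "x \<in> E'" "x \<noteq> a" "x \<noteq> b" using insert E'(7) by auto
  obtain x' where x': "basic G m (insert x' (E' - {x}))" "sgen G m (insert x' (E' - {x})) = sgen G m E'"
     "card (insert x' (E' - {x})) = card E'" "cm x' a" "cm x' b"
    using MC[OF E'(2) E'(1) E'(5) E'(6) x(1) x(2) x(3) d ab] by blast
  let ?E2 = "insert x' (E' - {x})"
  have "finite ?E2" using E'(1) by simp
  moreover have "sgen G m ?E2 = sgen G m E" using x'(2) E'(3) by simp
  moreover have "card ?E2 = card E" using x'(3) E'(4) by simp
  moreover have "a \<in> ?E2" "b \<in> ?E2" using E'(5,6) x by auto
  moreover have "E - insert x X \<subseteq> ?E2" using E'(7) by auto
  moreover have "\<forall>z\<in>?E2. z \<notin> E - insert x X \<longrightarrow> cm z a \<and> cm z b"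
  proof (intro ballI impI)
    fix z assume z: "z \<in> ?E2" "z \<notin> E - insert x X"
    show "cm z a \<and> cm z b"
    proof (cases "z = x'")
      case True then show ?thesis using x' by simp
    next
      case False then have "z \<in> E'" "z \<noteq> x" using z by auto
      then show ?thesis using E'(8) z(2) by auto
    qed
  qed
  ultimately show ?case using x'(1) by blast
qed

lemma lprod_filter: "set ws \<subseteq> carrier G \<Longrightarrow>
   pm (lprod G ws) (lprod G (filter P ws) \<otimes> lprod G (filter (\<lambda>x. \<not> P x) ws))"
proof (induction ws)
  case Nil then show ?case by (simp add: pm_refl)
next
  case (Cons x ws)
  let ?F = "lprod G (filter P ws)" and ?R = "lprod G (filter (\<lambda>x. \<not> P x) ws)"
  have x: "x \<in> carrier G" and ws: "set ws \<subseteq> carrier G" using Cons by auto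
  have h1: "set (filter P ws) \<subseteq> carrier G" and h2: "set (filter (\<lambda>x. \<not> P x) ws) \<subseteq> carrier G" using ws by auto
  have cF: "?F \<in> carrier G" "?R \<in> carrier G" using lprod_carr[OF h1] lprod_carr[OF h2] by auto
  have i: "pm (x \<otimes> lprod G ws) (x \<otimes> (?F \<otimes> ?R))" using Cons x ws cF by (intro pm_multl) auto
  show ?case
  proof (cases "P x")
    case True
    then show ?thesis using i x cF by (simp add: m_assoc)
  next
    case False
    have e1: "x \<otimes> (?F \<otimes> ?R) = (x \<otimes> ?F) \<otimes> ?R" using x cF by (simp add: m_assoc)
    have p2: "pm ((x \<otimes> ?F) \<otimes> ?R) ((?F \<otimes> x) \<otimes> ?R)"
      using commute_past[of x "filter P ws"] x ws cF by (intro pm_multr) auto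
    have e3: "(?F \<otimes> x) \<otimes> ?R = ?F \<otimes> (x \<otimes> ?R)" using x cF by (simp add: m_assoc)
    have "pm (x \<otimes> lprod G ws) (?F \<otimes> (x \<otimes> ?R))"
      using pm_trans[OF _ _ i[unfolded e1] p2] e3 x cF by simp
    then show ?thesis using False by simp
  qed
qed

lemma BU: assumes bAB: "basic G m (A \<union> B)" and disj: "A \<inter> B = {}" and bB': "basic G m B'"
  and sg: "sgen G m B' = sgen G m B"
  shows "basic G m (A \<union> B') \<and> sgen G m (A \<union> B') = sgen G m (A \<union> B)"
proof -
  have AB: "A \<union> B \<subseteq> carrier G" using bAB basic_carr by auto
  have B: "B \<subseteq> carrier G" and Ac: "A \<subseteq> carrier G" using AB by auto
  have B'c: "B' \<subseteq> carrier G" using bB' basic_carr by auto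
  have ABc: "A \<union> B' \<subseteq> carrier G" using Ac B'c by auto
  have "basic G m (A \<union> B')"
    unfolding basic_def
  proof (rule conjI[OF ABc], intro allI impI)
    fix ws assume ws: "distinct ws \<and> ws \<noteq> [] \<and> set ws \<subseteq> A \<union> B'"
    let ?us = "filter (\<lambda>x. x \<in> A) ws" and ?vs = "filter (\<lambda>x. x \<notin> A) ws"
    have wc: "set ws \<subseteq> carrier G" using ws ABc by auto
    have svs: "set ?vs \<subseteq> B'" using ws by auto
    have "lprod G ?vs \<in> sgen G m B'" using lprod_sgen[OF B'c] sgen_self[OF B'c] svs by auto
    then obtain vs' where vs': "distinct vs'" "set vs' \<subseteq> B" "pm (lprod G ?vs) (lprod G vs')"
      using sg sgen_E by blast
    have cvs: "set vs' \<subseteq> carrier G" using vs' B by auto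
    have cus: "set ?us \<subseteq> carrier G" "set ?vs \<subseteq> carrier G" using wc by auto
    have lus: "lprod G ?us \<in> carrier G" "lprod G ?vs \<in> carrier G" "lprod G vs' \<in> carrier G"
      using lprod_carr[OF cus(1)] lprod_carr[OF cus(2)] lprod_carr[OF cvs] by auto
    have p1: "pm (lprod G ws) (lprod G ?us \<otimes> lprod G ?vs)" using lprod_filter[OF wc] by simp
    have p2: "pm (lprod G ?us \<otimes> lprod G ?vs) (lprod G ?us \<otimes> lprod G vs')"
      using vs' lus by (intro pm_multl) auto
    have p3: "pm (lprod G ws) (lprod G (?us @ vs'))"
      using pm_trans[OF _ _ p1 p2] lus by (simp add: lprod_append[OF cus(1) cvs])
    show "lprod G ws \<noteq> \<one> \<and> lprod G ws \<noteq> m"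
    proof (cases "?us @ vs' = []")
      case True
      then have "?vs = ws" using True by (simp add: filter_empty_conv)
      then have nb: "lprod G ?vs \<noteq> \<one> \<and> lprod G ?vs \<noteq> m" using bB' ws svs unfolding basic_def by auto
      have "lprod G ?vs = \<one> \<or> lprod G ?vs = m" using vs'(3) True m_carr unfolding pm_def by auto
      then show ?thesis using nb by auto
    next
      case False
      have "distinct (?us @ vs')" using ws vs' disj by auto
      moreover have "set (?us @ vs') \<subseteq> A \<union> B" using vs' by auto
      ultimately have "lprod G (?us @ vs') \<noteq> \<one> \<and> lprod G (?us @ vs') \<noteq> m"
        using bAB False unfolding basic_def by blast
      moreover have "set (?us @ vs') \<subseteq> carrier G" using cus cvs by auto
      ultimately show ?thesis using pm_unit[OF _ p3] lprod_carr by blast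
    qed
  qed
  moreover have "sgen G m (A \<union> B') = sgen G m (A \<union> B)"
  proof
    have "A \<union> B' \<subseteq> sgen G m (A \<union> B)"
      using sgen_self[OF AB] sgen_self[OF B'c] sg sgen_mono[OF AB, of B] by auto
    then show "sgen G m (A \<union> B') \<subseteq> sgen G m (A \<union> B)" using sgen_closure[OF AB] by auto
  next
    have "A \<union> B \<subseteq> sgen G m (A \<union> B')"
      using sgen_self[OF ABc] sgen_self[OF B] sg sgen_mono[OF ABc, of B'] by auto
    then show "sgen G m (A \<union> B) \<subseteq> sgen G m (A \<union> B')" using sgen_closure[OF ABc] by auto
  qed
  ultimately show ?thesis by blast
qed

lemma mainL: "finite E \<Longrightarrow> basic G m E \<Longrightarrow> \<exists>(k::nat) E' (F :: nat \<Rightarrow> 'a set). replacement G m E E' \<and> finite E' \<and> card E' = card E \<and>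
   E' = (\<Union>j\<in>{0..k}. F j) \<and>
   (\<forall>j\<in>{0..k}. \<forall>j'\<in>{0..k}. j \<noteq> j' \<longrightarrow> F j \<inter> F j' = {}) \<and>
   (\<forall>j\<in>{1..k}. anticommutative G m (F j) \<and> card (F j) = 2) \<and>
   commutative_set G (F 0) \<and>
   (\<forall>j\<in>{0..k}. \<forall>j'\<in>{0..k}. j \<noteq> j' \<longrightarrow> sets_commute G (F j) (F j'))"
proof (induction "card E" arbitrary: E rule: less_induct)
  case less
  have fin: "finite E" and bE: "basic G m E" using less by auto
  have Ec: "E \<subseteq> carrier G" using bE basic_carr by auto
  show ?case
  proof (cases "\<forall>e\<in>E. \<forall>f\<in>E. cm e f")
    case True
    have "replacement G m E E" using bE by (simp add: replacement_def)
    moreover have "commutative_set G E" using True by (simp add: commutative_set_def cm_def)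
    ultimately show ?thesis using fin
      by (intro exI[of _ 0] exI[of _ E] exI[of _ "\<lambda>_. E"]) auto
  next
    case False
    then obtain a b where ab: "a \<in> E" "b \<in> E" "\<not> cm a b" by blast
    have abc: "a \<in> carrier G" "b \<in> carrier G" using ab Ec by auto
    have an_ab: "an a b" using cm_or_an[OF abc] ab by auto
    have an_ba: "an b a" using an_sym[OF abc an_ab] .
    have dab: "a \<noteq> b" using ab cm_refl by auto
    obtain E2 where E2: "finite E2" "basic G m E2" "sgen G m E2 = sgen G m E" "card E2 = card E"
      "a \<in> E2" "b \<in> E2" "E - (E - {a,b}) \<subseteq> E2" "\<forall>z\<in>E2. z \<notin> E - (E - {a,b}) \<longrightarrow> cm z a \<and> cm z b"
      using IT[OF bE fin ab(1) ab(2) dab an_ab, of "E - {a,b}"] fin by auto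
    have EX: "E - (E - {a,b}) = {a,b}" using ab by auto
    define E1 where "E1 = E2 - {a,b}"
    have fE1: "finite E1" using E2(1) E1_def by auto
    have bE1: "basic G m E1" using basic_subset[OF E2(2)] E1_def by auto
    have E1c: "E1 \<subseteq> carrier G" using bE1 basic_carr by auto
    have cE1: "card E1 = card E - 2" using E2(4,5,6) E2(1) dab unfolding E1_def
      by (simp add: card_Diff_subset)
    have "card E \<ge> 2"
    proof -
      have "card {a,b} \<le> card E" using ab fin by (intro card_mono) auto
      then show ?thesis using dab by simp
    qed
    then have "card E1 < card E" using cE1 by simp
    then obtain k :: nat and E1' and F :: "nat \<Rightarrow> 'a set" where IH: "replacement G m E1 E1'" "finite E1'" "card E1' = card E1"
      "E1' = (\<Union>j\<in>{0..k}. F j)"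
      "\<forall>j\<in>{0..k}. \<forall>j'\<in>{0..k}. j \<noteq> j' \<longrightarrow> F j \<inter> F j' = {}"
      "\<forall>j\<in>{1..k}. anticommutative G m (F j) \<and> card (F j) = 2"
      "commutative_set G (F 0)"
      "\<forall>j\<in>{0..k}. \<forall>j'\<in>{0..k}. j \<noteq> j' \<longrightarrow> sets_commute G (F j) (F j')"
      using less(1)[OF _ fE1 bE1] by blast
    have bE1': "basic G m E1'" and sE1': "sgen G m E1' = sgen G m E1" using IH(1) by (auto simp: replacement_def)
    have E1'c: "E1' \<subseteq> carrier G" using bE1' basic_carr by auto
    have cmE1: "\<forall>z\<in>E1. cm z a \<and> cm z b" using E2(8) EX E1_def by auto
    have cmE1': "\<forall>w\<in>E1'. cm w a \<and> cm w b"
    proof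
      fix w assume "w \<in> E1'"
      then have w: "w \<in> sgen G m E1" using sgen_self[OF E1'c] sE1' by auto
      show "cm w a \<and> cm w b" using sgen_cm[OF E1c abc(1) _ w] sgen_cm[OF E1c abc(2) _ w] cmE1 by auto
    qed
    have aE1': "a \<notin> E1'" using cmE1' not_cm_an[OF abc(2) abc(1)] an_ba cm_sym by blast
    have bE1'': "b \<notin> E1'" using cmE1' not_cm_an[OF abc(1) abc(2)] an_ab cm_sym by blast
    have E2eq: "{a,b} \<union> E1 = E2" using E2(5,6) E1_def by auto
    have BU': "basic G m ({a,b} \<union> E1') \<and> sgen G m ({a,b} \<union> E1') = sgen G m ({a,b} \<union> E1)"
      using BU[of "{a,b}" E1 E1'] E2eq E2(2) bE1' sE1' E1_def by auto
    define E' where "E' = {a,b} \<union> E1'"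
    define F' where "F' = F(Suc k := {a,b})"
    have rep: "replacement G m E E'" using BU' E2eq E2(3) E'_def by (simp add: replacement_def)
    have fE': "finite E'" using IH(2) E'_def by simp
    have cE': "card E' = card E"
    proof -
      have "card E' = card {a,b} + card E1'" unfolding E'_def using aE1' bE1'' IH(2)
        by (subst card_Un_disjoint) auto
      then show ?thesis using dab IH(3) cE1 \<open>card E \<ge> 2\<close> by simp
    qed
    have F'lo: "\<And>j. j \<in> {0..k} \<Longrightarrow> F' j = F j" unfolding F'_def by auto
    have F'k: "F' (Suc k) = {a,b}" unfolding F'_def by simp
    have Fsub: "\<And>j. j \<in> {0..k} \<Longrightarrow> F j \<subseteq> E1'" using IH(4) by auto
    have rng: "{0..Suc k} = insert (Suc k) {0..k}" by auto
    have U: "E' = (\<Union>j\<in>{0..Suc k}. F' j)"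
    proof -
      have "(\<Union>j\<in>{0..Suc k}. F' j) = F' (Suc k) \<union> (\<Union>j\<in>{0..k}. F' j)" unfolding rng by simp
      also have "(\<Union>j\<in>{0..k}. F' j) = (\<Union>j\<in>{0..k}. F j)" using F'lo by simp
      finally show ?thesis using F'k IH(4) E'_def by simp
    qed
    have D: "\<forall>j\<in>{0..Suc k}. \<forall>j'\<in>{0..Suc k}. j \<noteq> j' \<longrightarrow> F' j \<inter> F' j' = {}"
    proof (intro ballI impI)
      fix j j' assume j: "j \<in> {0..Suc k}" "j' \<in> {0..Suc k}" "j \<noteq> j'"
      show "F' j \<inter> F' j' = {}"
      proof (cases "j = Suc k")
        case True
        then have "j' \<in> {0..k}" using j by auto
        then show ?thesis using True F'k F'lo Fsub aE1' bE1'' by fastforce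
      next
        case False
        then have jj: "j \<in> {0..k}" using j by auto
        show ?thesis
        proof (cases "j' = Suc k")
          case True then show ?thesis using jj F'k F'lo Fsub aE1' bE1'' by fastforce
        next
          case False then have "j' \<in> {0..k}" using j by auto
          then show ?thesis using jj j(3) IH(5) F'lo by auto
        qed
      qed
    qed
    have AC: "\<forall>j\<in>{1..Suc k}. anticommutative G m (F' j) \<and> card (F' j) = 2"
    proof
      fix j assume j: "j \<in> {1..Suc k}"
      show "anticommutative G m (F' j) \<and> card (F' j) = 2"
      proof (cases "j = Suc k")
        case True
        have "anticommutative G m {a,b}" using an_ab an_ba unfolding anticommutative_def by auto
        then show ?thesis using True F'k dab by simp
      next
        case False then have "j \<in> {1..k}" "j \<in> {0..k}" using j by auto
        then show ?thesis using IH(6) F'lo by auto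
      qed
    qed
    have C0: "commutative_set G (F' 0)" using IH(7) F'lo by simp
    have SC: "\<forall>j\<in>{0..Suc k}. \<forall>j'\<in>{0..Suc k}. j \<noteq> j' \<longrightarrow> sets_commute G (F' j) (F' j')"
    proof (intro ballI impI)
      fix j j' assume j: "j \<in> {0..Suc k}" "j' \<in> {0..Suc k}" "j \<noteq> j'"
      have ab_comm: "\<And>e f. e \<in> {a,b} \<Longrightarrow> f \<in> E1' \<Longrightarrow> e \<otimes> f = f \<otimes> e"
        using cmE1' unfolding cm_def by auto
      show "sets_commute G (F' j) (F' j')"
      proof (cases "j = Suc k")
        case True
        then have "j' \<in> {0..k}" using j by auto
        then show ?thesis using True F'k F'lo Fsub ab_comm unfolding sets_commute_def by blast
      next
        case False
        then have jj: "j \<in> {0..k}" using j by auto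
        show ?thesis
        proof (cases "j' = Suc k")
          case True then show ?thesis using jj F'k F'lo Fsub ab_comm unfolding sets_commute_def
            by (metis subsetD)
        next
          case False then have "j' \<in> {0..k}" using j by auto
          then show ?thesis using jj j(3) IH(8) F'lo by auto
        qed
      qed
    qed
    show ?thesis using rep fE' cE' U D AC C0 SC by blast
  qed
qed

end

theorem theorem5p6:
  fixes G :: "('a, 'b) monoid_scheme" and m :: 'a and E :: "'a set" and n :: nat
  assumes "signed_group G m"
    and "basic G m E" and "finite E" and "card E = n" and "n \<ge> 2"
    and "\<exists>e\<in>E. \<exists>f\<in>E. anticommute G m e f"
  shows "\<exists>k \<in> {1..n}. \<exists>E' (F :: nat \<Rightarrow> 'a set).
           replacement G m E E' \<and>
           E' = (\<Union>j\<in>{0..k}. F j) \<and>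
           (\<forall>j\<in>{0..k}. \<forall>j'\<in>{0..k}. j \<noteq> j' \<longrightarrow> F j \<inter> F j' = {}) \<and>
           (\<forall>j\<in>{1..k}. anticommutative G m (F j) \<and> card (F j) \<ge> 2) \<and>
           commutative_set G (F 0) \<and>
           (\<forall>j\<in>{0..k}. \<forall>j'\<in>{0..k}. j \<noteq> j' \<longrightarrow> sets_commute G (F j) (F j'))"
proof -
  have grp: "group G" using assms(1) unfolding signed_group_def by (rule conjunct1)
  interpret S: sg G m by (rule sg.intro[OF grp]) (simp add: sg_axioms_def assms(1))
  obtain k :: nat and E' and F :: "nat \<Rightarrow> 'a set" where M: "replacement G m E E'" "finite E'" "card E' = card E"
      "E' = (\<Union>j\<in>{0..k}. F j)"
      "\<forall>j\<in>{0..k}. \<forall>j'\<in>{0..k}. j \<noteq> j' \<longrightarrow> F j \<inter> F j' = {}"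
      "\<forall>j\<in>{1..k}. anticommutative G m (F j) \<and> card (F j) = 2"
      "commutative_set G (F 0)"
      "\<forall>j\<in>{0..k}. \<forall>j'\<in>{0..k}. j \<noteq> j' \<longrightarrow> sets_commute G (F j) (F j')"
    using S.mainL[OF assms(3) assms(2)] by blast
  have bE': "basic G m E'" and sE': "sgen G m E' = sgen G m E" using M(1) by (auto simp: replacement_def)
  have E'c: "E' \<subseteq> carrier G" using bE' S.basic_carr by auto
  have Ec: "E \<subseteq> carrier G" using assms(2) S.basic_carr by auto
  have k1: "1 \<le> k"
  proof (rule ccontr)
    assume "\<not> 1 \<le> k"
    then have "k = 0" by simp
    then have "E' = F 0" using M(4) by simp
    then have comm: "\<forall>x\<in>E'. \<forall>y\<in>E'. S.cm x y" using M(7) by (simp add: commutative_set_def S.cm_def)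
    have st1: "\<forall>y\<in>E'. \<forall>w\<in>sgen G m E'. S.cm w y"
    proof (intro ballI)
      fix y w assume y: "y \<in> E'" and w: "w \<in> sgen G m E'"
      show "S.cm w y" using S.sgen_cm[OF E'c _ _ w, of y] y E'c comm by auto
    qed
    have st2: "\<forall>w\<in>sgen G m E'. \<forall>w'\<in>sgen G m E'. S.cm w' w"
    proof (intro ballI)
      fix w w' assume w: "w \<in> sgen G m E'" and w': "w' \<in> sgen G m E'"
      have wc: "w \<in> carrier G" using S.sgen_carr[OF E'c] w by auto
      have "\<forall>y\<in>E'. S.cm y w" using st1 w S.cm_sym by blast
      then show "S.cm w' w" using S.sgen_cm[OF E'c wc _ w'] by auto
    qed
    obtain e f where ef: "e \<in> E" "f \<in> E" "anticommute G m e f" using assms(6) by blast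
    have "e \<in> sgen G m E'" "f \<in> sgen G m E'" using S.sgen_self[OF Ec] sE' ef by auto
    then have "S.cm e f" using st2 by blast
    then show False using S.not_cm_an[of e f] ef Ec by auto
  qed
  have kn: "k \<le> n"
  proof -
    have fin: "\<forall>j\<in>{1..k}. finite (F j)" using M(6) by (metis card_ge_0_finite zero_less_numeral)
    have disj: "\<forall>j\<in>{1..k}. \<forall>j'\<in>{1..k}. j \<noteq> j' \<longrightarrow> F j \<inter> F j' = {}" using M(5) by auto
    have "card (\<Union>j\<in>{1..k}. F j) = (\<Sum>j\<in>{1..k}. card (F j))"
      using fin disj by (intro card_UN_disjoint) auto
    also have "\<dots> = (\<Sum>j\<in>{1..k}. 2)" using M(6) by (intro sum.cong) auto
    also have "\<dots> = 2 * k" by simp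
    finally have c: "card (\<Union>j\<in>{1..k}. F j) = 2 * k" .
    have "(\<Union>j\<in>{1..k}. F j) \<subseteq> E'" using M(4) by auto
    then have "card (\<Union>j\<in>{1..k}. F j) \<le> card E'" using M(2) by (rule card_mono[rotated])
    then show ?thesis using c M(3) assms(4) by simp
  qed
  have "\<forall>j\<in>{1..k}. anticommutative G m (F j) \<and> card (F j) \<ge> 2" using M(6) by auto
  then show ?thesis using k1 kn M by (intro bexI[of _ k] exI[of _ E'] exI[of _ F]) auto
qed

end
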